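(* Let $R$ be an integral domain which is a Hilbert ring. Then every radical ideal $I$ of $R[X]$ which is a finite intersection of G-ideals of $R[X]$ is power stable.
   Context: A ring is a Hilbert ring if every prime ideal is an intersection of maximal ideals. A prime ideal $Q$ of a ring $A$ is a G-ideal if the fraction field of $A/Q$ is finitely generated as an algebra over $A/Q$. An ideal $I$ of the polynomial ring $R[X]$ over an integral domain $R$ is called power stable if $I^t\cap R = (I\cap R)^t$ for all integers $t\geq 1$. *)

theory Defs
  imports "HOL-Computational_Algebra.Polynomial"
begin

definition is_ideal :: "'a::comm_ring_1 set \<Rightarrow> bool" where
  "is_ideal I \<longleftrightarrow> 0 \<in> I \<and> (\<forall>x\<in>I. \<forall>y\<in>I. x + y \<in> I) \<and> (\<forall>r. \<forall>x\<in>I. r * x \<in> I)"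

definition prime_ideal :: "'a::comm_ring_1 set \<Rightarrow> bool" where
  "prime_ideal P \<longleftrightarrow> is_ideal P \<and> P \<noteq> UNIV \<and> (\<forall>a b. a * b \<in> P \<longrightarrow> a \<in> P \<or> b \<in> P)"

definition maximal_ideal :: "'a::comm_ring_1 set \<Rightarrow> bool" where
  "maximal_ideal M \<longleftrightarrow> is_ideal M \<and> M \<noteq> UNIV \<and>
     (\<forall>J. is_ideal J \<and> M \<subseteq> J \<longrightarrow> J = M \<or> J = UNIV)"

definition radical_ideal :: "'a::comm_ring_1 set \<Rightarrow> bool" where
  "radical_ideal I \<longleftrightarrow> is_ideal I \<and> (\<forall>x n. x ^ n \<in> I \<longrightarrow> x \<in> I)"

definition hilbert_ring :: "'a::comm_ring_1 itself \<Rightarrow> bool" where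
  "hilbert_ring _ \<longleftrightarrow> (\<forall>P::'a set. prime_ideal P \<longrightarrow>
      (\<exists>S. (\<forall>M\<in>S. maximal_ideal M) \<and> P = \<Inter>S))"

definition ideal_gen :: "'a::comm_ring_1 set \<Rightarrow> 'a set" where
  "ideal_gen S = \<Inter>{J. is_ideal J \<and> S \<subseteq> J}"

definition ideal_prod :: "'a::comm_ring_1 set \<Rightarrow> 'a set \<Rightarrow> 'a set" where
  "ideal_prod I J = ideal_gen {a * b | a b. a \<in> I \<and> b \<in> J}"

fun ideal_pow :: "'a::comm_ring_1 set \<Rightarrow> nat \<Rightarrow> 'a set" where
  "ideal_pow I 0 = UNIV"
| "ideal_pow I (Suc n) = ideal_prod (ideal_pow I n) I"

text \<open>The fraction field of \<open>A/Q\<close> (for a prime ideal \<open>Q\<close>) is represented by pairs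
  \<open>(a,b)\<close> of elements of \<open>A\<close> with \<open>b \<notin> Q\<close> (standing for \<open>(a + Q)/(b + Q)\<close>), where
  \<open>(a,b)\<close> and \<open>(c,d)\<close> denote the same element iff \<open>a d - c b \<in> Q\<close>.\<close>

definition frac_dom :: "'a::comm_ring_1 set \<Rightarrow> ('a \<times> 'a) set" where
  "frac_dom Q = {(a, b). b \<notin> Q}"

definition frac_eq :: "'a::comm_ring_1 set \<Rightarrow> 'a \<times> 'a \<Rightarrow> 'a \<times> 'a \<Rightarrow> bool" where
  "frac_eq Q p q \<longleftrightarrow> fst p * snd q - fst q * snd p \<in> Q"

text \<open>Representatives of the \<open>A/Q\<close>-subalgebra of the fraction field generated by \<open>S\<close>.\<close>
inductive_set frac_alg :: "'a::comm_ring_1 set \<Rightarrow> ('a \<times> 'a) set \<Rightarrow> ('a \<times> 'a) set"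
  for Q S where
  base: "(a, 1) \<in> frac_alg Q S"
| gen: "s \<in> S \<Longrightarrow> s \<in> frac_alg Q S"
| add: "(a, b) \<in> frac_alg Q S \<Longrightarrow> (c, d) \<in> frac_alg Q S \<Longrightarrow> (a * d + c * b, b * d) \<in> frac_alg Q S"
| mult: "(a, b) \<in> frac_alg Q S \<Longrightarrow> (c, d) \<in> frac_alg Q S \<Longrightarrow> (a * c, b * d) \<in> frac_alg Q S"

definition G_ideal :: "'a::comm_ring_1 set \<Rightarrow> bool" where
  "G_ideal Q \<longleftrightarrow> prime_ideal Q \<and>
     (\<exists>S. finite S \<and> S \<subseteq> frac_dom Q \<and>
        (\<forall>p\<in>frac_dom Q. \<exists>q\<in>frac_alg Q S. frac_eq Q q p))"

definition contract :: "'a::comm_ring_1 poly set \<Rightarrow> 'a set" where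
  "contract I = {a. [:a:] \<in> I}"

definition power_stable :: "'a::idom poly set \<Rightarrow> bool" where
  "power_stable I \<longleftrightarrow> (\<forall>t::nat. t \<ge> 1 \<longrightarrow> contract (ideal_pow I t) = ideal_pow (contract I) t)"

end

theory Submission
  imports Defs
begin



lemma idealD:
  assumes "is_ideal I"
  shows "0 \<in> I" "x \<in> I \<Longrightarrow> y \<in> I \<Longrightarrow> x + y \<in> I" "x \<in> I \<Longrightarrow> r * x \<in> I"
    "x \<in> I \<Longrightarrow> x * r \<in> I" "x \<in> I \<Longrightarrow> - x \<in> I" "x \<in> I \<Longrightarrow> y \<in> I \<Longrightarrow> x - y \<in> I"
proof -
  show "0 \<in> I" using assms unfolding is_ideal_def by blast
  show "x \<in> I \<Longrightarrow> y \<in> I \<Longrightarrow> x + y \<in> I" using assms unfolding is_ideal_def by blast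
  show "x \<in> I \<Longrightarrow> r * x \<in> I" using assms unfolding is_ideal_def by blast
  show "x \<in> I \<Longrightarrow> x * r \<in> I" using assms unfolding is_ideal_def by (metis mult.commute)
  show *: "x \<in> I \<Longrightarrow> - x \<in> I" using assms unfolding is_ideal_def
    by (metis mult_minus1)
  show "x \<in> I \<Longrightarrow> y \<in> I \<Longrightarrow> x - y \<in> I" using assms unfolding is_ideal_def
    by (metis diff_conv_add_uminus mult_minus1)
qed

lemma ideal_sum: "is_ideal I \<Longrightarrow> (\<And>i. i \<in> A \<Longrightarrow> f i \<in> I) \<Longrightarrow> sum f A \<in> I"
  by (induction A rule: infinite_finite_induct) (auto intro: idealD)

lemma ideal_UNIV: "is_ideal UNIV" by (simp add: is_ideal_def)

lemma ideal_Inter: "(\<And>J. J \<in> S \<Longrightarrow> is_ideal J) \<Longrightarrow> is_ideal (\<Inter>S)"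
  unfolding is_ideal_def by (simp add: Inter_iff)

lemma ideal_gen_ideal: "is_ideal (ideal_gen S)"
  unfolding ideal_gen_def by (rule ideal_Inter) auto

lemma ideal_gen_sub: "S \<subseteq> ideal_gen S"
  unfolding ideal_gen_def by blast

lemma ideal_gen_least: "is_ideal J \<Longrightarrow> S \<subseteq> J \<Longrightarrow> ideal_gen S \<subseteq> J"
  unfolding ideal_gen_def by blast

lemma ideal_pow_ideal: "is_ideal (ideal_pow I t)"
  by (cases t) (auto simp: ideal_UNIV ideal_prod_def ideal_gen_ideal)

lemma ideal_prod_mem: "a \<in> A \<Longrightarrow> b \<in> B \<Longrightarrow> a * b \<in> ideal_prod A B"
  unfolding ideal_prod_def by (rule subsetD[OF ideal_gen_sub]) blast

lemma ideal_prod_ideal: "is_ideal (ideal_prod A B)"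
  unfolding ideal_prod_def by (rule ideal_gen_ideal)

lemma ideal_prod_least: "is_ideal C \<Longrightarrow> (\<And>a b. a \<in> A \<Longrightarrow> b \<in> B \<Longrightarrow> a * b \<in> C) \<Longrightarrow> ideal_prod A B \<subseteq> C"
  unfolding ideal_prod_def by (rule ideal_gen_least) auto

lemma ideal_pow_mono: "A \<subseteq> B \<Longrightarrow> ideal_pow A t \<subseteq> ideal_pow B t"
proof (induction t)
  case (Suc t)
  have "ideal_prod (ideal_pow A t) A \<subseteq> ideal_prod (ideal_pow B t) B"
  proof (rule ideal_prod_least[OF ideal_prod_ideal])
    fix a b assume "a \<in> ideal_pow A t" "b \<in> A"
    then show "a * b \<in> ideal_prod (ideal_pow B t) B" using Suc by (intro ideal_prod_mem) auto
  qed
  then show ?case by simp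
qed simp

lemma power_in_pow: "a \<in> A \<Longrightarrow> a ^ t \<in> ideal_pow A t"
proof (induction t)
  case (Suc t)
  have "a ^ t * a \<in> ideal_prod (ideal_pow A t) A" using Suc by (intro ideal_prod_mem) auto
  then show ?case by (simp add: mult.commute)
qed simp

lemma ideal_one: "is_ideal I \<Longrightarrow> 1 \<in> I \<Longrightarrow> I = UNIV"
  using idealD(3)[of I 1] by auto

lemma prime_ideal_D: assumes "prime_ideal P"
  shows "is_ideal P" "1 \<notin> P" "a * b \<in> P \<Longrightarrow> a \<in> P \<or> b \<in> P"
  using assms ideal_one unfolding prime_ideal_def by blast+

lemma prime_power: "prime_ideal P \<Longrightarrow> x ^ n \<in> P \<Longrightarrow> x \<in> P"
  by (induction n) (auto dest: prime_ideal_D)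

lemma prime_prod: assumes "prime_ideal P" shows "finite A \<Longrightarrow> (\<And>i. i \<in> A \<Longrightarrow> f i \<notin> P) \<Longrightarrow> prod f A \<notin> P"
proof (induction A rule: finite_induct)
  case empty then show ?case using prime_ideal_D(2)[OF assms] by auto
next
  case (insert x F)
  have "f x \<notin> P" "prod f F \<notin> P" using insert by auto
  then have "f x * prod f F \<notin> P" using prime_ideal_D(3)[OF assms] by blast
  then show ?case using insert by simp
qed

lemma ideal_prod_in: "is_ideal I \<Longrightarrow> finite A \<Longrightarrow> i \<in> A \<Longrightarrow> f i \<in> I \<Longrightarrow> prod f A \<in> I"
  by (metis idealD(4) prod.remove)

lemma maximal_inv:
  assumes M: "maximal_ideal M" and c: "c \<notin> M"
  shows "\<exists>t. t * c - 1 \<in> M"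
proof -
  have iM: "is_ideal M" using M unfolding maximal_ideal_def by blast
  define J where "J = {x + r * c | x r. x \<in> M}"
  have "is_ideal J" unfolding is_ideal_def J_def
  proof (intro conjI ballI allI)
    show "0 \<in> {x + r * c |x r. x \<in> M}" using idealD(1)[OF iM] by (intro CollectI exI[of _ 0]) auto
  next
    fix x y assume "x \<in> {x + r * c |x r. x \<in> M}" "y \<in> {x + r * c |x r. x \<in> M}"
    then obtain x1 r1 x2 r2 where "x = x1 + r1 * c" "y = x2 + r2 * c" "x1 \<in> M" "x2 \<in> M" by blast
    then show "x + y \<in> {x + r * c |x r. x \<in> M}"
      by (intro CollectI exI[of _ "x1 + x2"] exI[of _ "r1 + r2"]) (auto intro: idealD[OF iM] simp: algebra_simps)
  next
    fix r x assume "x \<in> {x + r * c |x r. x \<in> M}"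
    then obtain x1 r1 where "x = x1 + r1 * c" "x1 \<in> M" by blast
    then show "r * x \<in> {x + r * c |x r. x \<in> M}"
      by (intro CollectI exI[of _ "r * x1"] exI[of _ "r * r1"]) (auto intro: idealD[OF iM] simp: algebra_simps)
  qed
  moreover have "M \<subseteq> J"
  proof
    fix x assume "x \<in> M" then show "x \<in> J" unfolding J_def by (intro CollectI exI[of _ x] exI[of _ 0]) simp
  qed
  moreover have "c \<in> J" unfolding J_def using idealD(1)[OF iM] by (intro CollectI exI[of _ 0] exI[of _ 1]) simp
  ultimately have "J = UNIV" using M c unfolding maximal_ideal_def by blast
  then obtain x r where h: "1 = x + r * c" "x \<in> M" unfolding J_def by blast
  have "r * c - 1 = - x" by (subst h(1)) simp
  then show ?thesis using idealD(5)[OF iM h(2)] by (intro exI[of _ r]) simp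
qed

lemma maximal_prime: assumes M: "maximal_ideal M" shows "prime_ideal M"
proof -
  have iM: "is_ideal M" using M unfolding maximal_ideal_def by blast
  have "a \<in> M \<or> b \<in> M" if "a * b \<in> M" for a b
  proof (rule ccontr)
    assume "\<not> (a \<in> M \<or> b \<in> M)"
    then obtain t where t: "t * a - 1 \<in> M" "b \<notin> M" using maximal_inv[OF M] by blast
    have "t * (a * b) \<in> M" by (rule idealD(3)[OF iM that])
    moreover have "b * (t * a - 1) \<in> M" by (rule idealD(3)[OF iM t(1)])
    ultimately have "t * (a * b) - b * (t * a - 1) \<in> M" by (rule idealD(6)[OF iM])
    then show False using t by (simp add: algebra_simps)
  qed
  then show ?thesis using M unfolding maximal_ideal_def prime_ideal_def by blast
qed

lemma exists_maximal:
  fixes I :: "'a::comm_ring_1 set"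
  assumes I: "is_ideal I" "1 \<notin> I"
  shows "\<exists>M. maximal_ideal M \<and> I \<subseteq> M"
proof -
  define A where "A = {J. is_ideal J \<and> I \<subseteq> J \<and> 1 \<notin> J}"
  have "\<exists>M\<in>A. \<forall>X\<in>A. M \<subseteq> X \<longrightarrow> X = M"
  proof (rule subset_Zorn_nonempty)
    show "A \<noteq> {}" using I unfolding A_def by blast
  next
    fix C assume C: "C \<noteq> {}" "subset.chain A C"
    have CA: "C \<subseteq> A" and ch: "\<And>X Y. X \<in> C \<Longrightarrow> Y \<in> C \<Longrightarrow> X \<subseteq> Y \<or> Y \<subseteq> X"
      using C(2) unfolding subset.chain_def by auto
    have "is_ideal (\<Union>C)" unfolding is_ideal_def
    proof (intro conjI ballI allI)
      obtain X where "X \<in> C" using C by blast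
      then show "0 \<in> \<Union>C" using CA unfolding A_def is_ideal_def by blast
    next
      fix x y assume "x \<in> \<Union>C" "y \<in> \<Union>C"
      then obtain X Y where XY: "x \<in> X" "y \<in> Y" "X \<in> C" "Y \<in> C" by blast
      then have "x \<in> X \<union> Y" "y \<in> X \<union> Y" by auto
      moreover have "X \<union> Y = X \<or> X \<union> Y = Y" using ch[OF XY(3,4)] by blast
      ultimately show "x + y \<in> \<Union>C" using XY CA unfolding A_def is_ideal_def by blast
    next
      fix r x assume "x \<in> \<Union>C"
      then show "r * x \<in> \<Union>C" using CA unfolding A_def is_ideal_def by blast
    qed
    then show "\<Union>C \<in> A" using C CA unfolding A_def by auto
  qed
  then obtain M where M: "M \<in> A" "\<And>X. X \<in> A \<Longrightarrow> M \<subseteq> X \<Longrightarrow> X = M" by blast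
  have "maximal_ideal M" unfolding maximal_ideal_def
  proof (intro conjI allI impI)
    show "is_ideal M" "M \<noteq> UNIV" using M unfolding A_def by auto
  next
    fix J assume J: "is_ideal J \<and> M \<subseteq> J"
    show "J = M \<or> J = UNIV"
    proof (cases "1 \<in> J")
      case True then show ?thesis using ideal_one J by blast
    next
      case False then have "J \<in> A" using J M unfolding A_def by auto
      then show ?thesis using M J by blast
    qed
  qed
  then show ?thesis using M unfolding A_def by blast
qed




definition cin :: "'a::comm_ring_1 set \<Rightarrow> 'a poly \<Rightarrow> bool" where
  "cin A p \<longleftrightarrow> (\<forall>i. coeff p i \<in> A)"

lemma cin_0: "is_ideal A \<Longrightarrow> cin A 0"
  by (simp add: cin_def idealD)

lemma cin_add: "is_ideal A \<Longrightarrow> cin A p \<Longrightarrow> cin A q \<Longrightarrow> cin A (p + q)"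
  by (simp add: cin_def idealD)

lemma cin_diff: "is_ideal A \<Longrightarrow> cin A p \<Longrightarrow> cin A q \<Longrightarrow> cin A (p - q)"
  by (simp add: cin_def idealD)

lemma cin_uminus: "is_ideal A \<Longrightarrow> cin A p \<Longrightarrow> cin A (- p)"
  by (simp add: cin_def idealD)

lemma cin_smult: "is_ideal A \<Longrightarrow> cin A p \<Longrightarrow> cin A (smult c p)"
  by (simp add: cin_def idealD)

lemma cin_const: "cin A [:a:] \<Longrightarrow> a \<in> A"
  unfolding cin_def by (metis coeff_pCons_0)

lemma cin_constI: "is_ideal A \<Longrightarrow> a \<in> A \<Longrightarrow> cin A [:a:]"
  unfolding cin_def by (simp add: coeff_pCons idealD split: nat.split)

lemma cin_monom: "is_ideal A \<Longrightarrow> c \<in> A \<Longrightarrow> cin A (monom c n)"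
  unfolding cin_def by (simp add: coeff_monom idealD)

lemma cin_mult_right: assumes "is_ideal A" "cin A p" shows "cin A (q * p)"
  unfolding cin_def coeff_mult
  using assms by (auto simp: cin_def intro!: ideal_sum idealD(3))

lemma cin_mult_left: assumes "is_ideal A" "cin A p" shows "cin A (p * q)"
  using cin_mult_right[OF assms, of q] by (simp add: mult.commute)

lemma cin_prod: assumes "cin A p" "cin B q" shows "cin (ideal_prod A B) (p * q)"
  unfolding cin_def coeff_mult
  using assms by (auto simp: cin_def intro!: ideal_sum ideal_prod_ideal ideal_prod_mem)

lemma cin_mono: "A \<subseteq> B \<Longrightarrow> cin A p \<Longrightarrow> cin B p"
  unfolding cin_def by blast

lemma contract_ideal: assumes "is_ideal I" shows "is_ideal (contract I)"
  unfolding is_ideal_def contract_def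
proof (intro conjI ballI allI; clarsimp)
  show "0 \<in> I" using idealD(1)[OF assms] by (simp add: zero_poly_def)
  fix x y assume "[:x:] \<in> I" "[:y:] \<in> I"
  then show "[:x + y:] \<in> I" using idealD(2)[OF assms] by fastforce
next
  fix r x assume "[:x:] \<in> I"
  then show "[:r * x:] \<in> I" using idealD(3)[OF assms, of "[:x:]" "[:r:]"] by (simp add: mult.commute)
qed

lemma contract_prime: assumes "prime_ideal Q" shows "prime_ideal (contract Q)"
  unfolding prime_ideal_def
proof (intro conjI allI impI)
  show "is_ideal (contract Q)" using contract_ideal prime_ideal_D(1)[OF assms] by blast
  show "contract Q \<noteq> UNIV" using prime_ideal_D(2)[OF assms] by (auto simp: contract_def one_pCons)
  fix a b assume "a * b \<in> contract Q"
  then have "[:a:] * [:b:] \<in> Q" by (simp add: contract_def mult.commute)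
  then show "a \<in> contract Q \<or> b \<in> contract Q" using prime_ideal_D(3)[OF assms] by (simp add: contract_def)
qed

lemma cin_in: assumes "is_ideal Q" "cin (contract Q) p" shows "p \<in> Q"
proof -
  have "monom (coeff p i) i \<in> Q" for i
  proof -
    have "[:coeff p i:] \<in> Q" using assms(2) by (simp add: cin_def contract_def)
    then have "[:coeff p i:] * monom 1 i \<in> Q" by (rule idealD(4)[OF assms(1)])
    then show ?thesis by (simp add: smult_monom)
  qed
  then have "(\<Sum>i\<le>degree p. monom (coeff p i) i) \<in> Q" by (intro ideal_sum[OF assms(1)])
  then show ?thesis by (simp add: poly_as_sum_of_monoms)
qed

lemma top_coeff:
  assumes P: "prime_ideal P"
    and v: "\<And>i. i > d \<Longrightarrow> coeff v i \<in> P" and w: "\<And>j. j > e \<Longrightarrow> coeff w j \<in> P"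
  shows "coeff (v * w) (d + e) - coeff v d * coeff w e \<in> P"
proof -
  have iP: "is_ideal P" using prime_ideal_D(1)[OF P] .
  have "coeff (v * w) (d + e) = coeff v d * coeff w (d + e - d) + (\<Sum>i\<in>{..d+e} - {d}. coeff v i * coeff w (d + e - i))"
    unfolding coeff_mult by (rule sum.remove) auto
  moreover have "(\<Sum>i\<in>{..d+e} - {d}. coeff v i * coeff w (d + e - i)) \<in> P"
  proof (rule ideal_sum[OF iP])
    fix i assume "i \<in> {..d+e} - {d}"
    then have "i > d \<or> d + e - i > e" by auto
    then show "coeff v i * coeff w (d + e - i) \<in> P" using v w idealD(3,4)[OF iP] by blast
  qed
  ultimately show ?thesis by simp
qed

lemma top_coeff_above:
  assumes P: "is_ideal P"
    and v: "\<And>i. i > d \<Longrightarrow> coeff v i \<in> P" and w: "\<And>j. j > e \<Longrightarrow> coeff w j \<in> P" and k: "k > d + e"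
  shows "coeff (v * w) k \<in> P"
  unfolding coeff_mult
proof (rule ideal_sum[OF P])
  fix i assume "i \<in> {..k}"
  then have "i > d \<or> k - i > e" using k by auto
  then show "coeff v i * coeff w (k - i) \<in> P" using v w idealD(3,4)[OF P] by blast
qed

lemma maxidx:
  assumes "is_ideal A" "\<not> cin A p"
  shows "\<exists>d. coeff p d \<notin> A \<and> (\<forall>i>d. coeff p i \<in> A)"
proof -
  define S where "S = {i. coeff p i \<notin> A}"
  have "S \<subseteq> {..degree p}" unfolding S_def using idealD(1)[OF assms(1)]
    by (auto simp: not_le) (metis coeff_eq_0 not_le)
  then have fin: "finite S" using finite_subset by blast
  have ne: "S \<noteq> {}" using assms(2) unfolding S_def cin_def by auto
  have "Max S \<in> S" using Max_in[OF fin ne] .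
  moreover have "\<forall>i>Max S. coeff p i \<in> A" using Max_ge[OF fin] unfolding S_def
    by (metis mem_Collect_eq not_le)
  ultimately show ?thesis unfolding S_def by blast
qed

lemma pdiv:
  fixes f g :: "'a::idom poly"
  assumes "g \<noteq> 0"
  shows "\<exists>k h r. smult (lead_coeff g ^ k) f = g * h + r \<and> (r = 0 \<or> degree r < degree g)"
proof -
  obtain h r where "pseudo_divmod f g = (h, r)" by (cases "pseudo_divmod f g")
  from pseudo_divmod[OF assms this] show ?thesis by blast
qed




definition gprop :: "'a::comm_ring_1 set \<Rightarrow> 'a \<Rightarrow> bool" where
  "gprop Q u \<longleftrightarrow> u \<notin> Q \<and> (\<forall>b. b \<notin> Q \<longrightarrow> (\<exists>n c. c * b - u ^ n \<in> Q))"

lemma G_ideal_gprop: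
  fixes Q :: "'a::comm_ring_1 set"
  assumes "G_ideal Q"
  shows "\<exists>u. gprop Q u"
proof -
  have P: "prime_ideal Q" using assms unfolding G_ideal_def by blast
  have iQ: "is_ideal Q" using prime_ideal_D(1)[OF P] .
  obtain S where S: "finite S" "S \<subseteq> frac_dom Q" "\<And>p. p \<in> frac_dom Q \<Longrightarrow> \<exists>q\<in>frac_alg Q S. frac_eq Q q p"
    using assms unfolding G_ideal_def by blast
  define u where "u = (\<Prod>s\<in>S. snd s)"
  have dv: "\<exists>n. snd x dvd u ^ n" if "x \<in> frac_alg Q S" for x
    using that
  proof (induction rule: frac_alg.induct)
    case (base a) then show ?case by auto
  next
    case (gen s)
    have "snd s dvd u" unfolding u_def using gen S(1) by (intro dvd_prodI)
    then show ?case by (intro exI[of _ 1]) simp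
  next
    case (add a b c d)
    then obtain n m where "b dvd u ^ n" "d dvd u ^ m" by auto
    then have "b * d dvd u ^ n * u ^ m" by (rule mult_dvd_mono)
    then show ?case by (intro exI[of _ "n + m"]) (simp add: power_add)
  next
    case (mult a b c d)
    then obtain n m where "b dvd u ^ n" "d dvd u ^ m" by auto
    then have "b * d dvd u ^ n * u ^ m" by (rule mult_dvd_mono)
    then show ?case by (intro exI[of _ "n + m"]) (simp add: power_add)
  qed
  have "u \<notin> Q" unfolding u_def
    by (rule prime_prod[OF P S(1)]) (use S(2) in \<open>auto simp: frac_dom_def\<close>)
  moreover have "\<exists>n c. c * b - u ^ n \<in> Q" if b: "b \<notin> Q" for b
  proof -
    have "(1, b) \<in> frac_dom Q" using b by (simp add: frac_dom_def)
    then obtain x where x: "x \<in> frac_alg Q S" "frac_eq Q x (1, b)" using S(3) by blast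
    obtain n where "snd x dvd u ^ n" using dv[OF x(1)] by blast
    then obtain e where e: "u ^ n = snd x * e" by (auto elim: dvdE)
    have "fst x * b - snd x \<in> Q" using x(2) by (simp add: frac_eq_def)
    then have "e * (fst x * b - snd x) \<in> Q" by (rule idealD(3)[OF iQ])
    moreover have "e * (fst x * b - snd x) = (fst x * e) * b - u ^ n" by (simp add: e algebra_simps)
    ultimately show ?thesis by metis
  qed
  ultimately show ?thesis unfolding gprop_def by blast
qed

lemma gprop_prime:
  assumes g: "gprop Q u" and P: "prime_ideal P" and QP: "Q \<subseteq> P" and b: "b \<in> P" "b \<notin> Q"
  shows "u \<in> P"
proof -
  obtain n c where "c * b - u ^ n \<in> Q" using g b unfolding gprop_def by blast
  then have "c * b - u ^ n \<in> P" using QP by blast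
  moreover have "c * b \<in> P" using idealD(3)[OF prime_ideal_D(1)[OF P] b(1)] .
  ultimately have "c * b - (c * b - u ^ n) \<in> P" using idealD(6)[OF prime_ideal_D(1)[OF P]] by blast
  then have "u ^ n \<in> P" by simp
  then show ?thesis by (rule prime_power[OF P])
qed

lemma geom_poly: "(1 - y) * (\<Sum>i<n. y ^ i) = 1 - (y::'a::comm_ring_1) ^ n"
  by (simp add: one_diff_power_eq)

lemma degree_lt_from_coeffs:
  fixes p :: "'a::zero poly"
  assumes "N > 0" "\<And>i. i \<ge> N \<Longrightarrow> coeff p i = 0"
  shows "degree p < N"
proof -
  have "degree p \<le> N - 1" using assms by (intro degree_le) auto
  then show ?thesis using assms(1) by linarith
qed




locale gsetup =
  fixes Q :: "'a::idom poly set" and u :: "'a poly"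
  assumes prime: "prime_ideal Q" and g: "gprop Q u"
begin

abbreviation "q \<equiv> contract Q"

lemma iQ: "is_ideal Q" using prime_ideal_D(1)[OF prime] .
lemma pq: "prime_ideal q" using contract_prime[OF prime] .
lemma iq: "is_ideal q" using prime_ideal_D(1)[OF pq] .
lemma one_q: "1 \<notin> q" using prime_ideal_D(2)[OF pq] .
lemma uQ: "u \<notin> Q" using g unfolding gprop_def by blast

lemma const_in: "[:c:] \<in> Q \<longleftrightarrow> c \<in> q" by (simp add: contract_def)

lemma exists_noncin: "\<exists>p\<in>Q. \<not> cin q p"
proof (rule ccontr)
  assume H: "\<not> (\<exists>p\<in>Q. \<not> cin q p)"
  define b where "b = 1 + pCons 0 u"
  have cb0: "coeff b 0 = 1" by (simp add: b_def)
  have "b \<notin> Q"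
  proof
    assume "b \<in> Q"
    then have "coeff b 0 \<in> q" using H cin_def by blast
    then show False using cb0 one_q by simp
  qed
  then obtain n c where nc: "c * b - u ^ n \<in> Q" using g unfolding gprop_def by blast
  define y where "y = - pCons 0 u"
  have b_y: "b = 1 - y" by (simp add: b_def y_def)
  have X: "pCons 0 u = [:0,1:] * u" by simp
  have "y = (- [:0,1:]) * u" unfolding y_def X by (simp only: minus_mult_left)
  then have ypow: "y ^ n = (- [:0,1:]) ^ n * u ^ n"
    by (simp only: power_mult_distrib)
  define S where "S = (\<Sum>i<n. y ^ i)"
  define Z :: "'a poly" where "Z = (- [:0,1:]) ^ n"
  define w where "w = S + Z * c"
  have geo: "b * S = 1 - Z * u ^ n" unfolding S_def b_y using geom_poly[of y n] ypow Z_def by simp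
  have "b * w - 1 = Z * (c * b - u ^ n)"
  proof -
    have "b * w - 1 = b * S + Z * (c * b) - 1" unfolding w_def by (simp add: algebra_simps)
    also have "\<dots> = Z * (c * b - u ^ n)" unfolding geo by (simp add: algebra_simps)
    finally show ?thesis .
  qed
  then have bw: "b * w - 1 \<in> Q" using idealD(3)[OF iQ nc, of Z] by simp
  then have cbw: "cin q (b * w - 1)" using H by blast
  have "\<not> cin q u" using uQ cin_in[OF iQ] by blast
  then obtain j where j: "coeff u j \<notin> q" unfolding cin_def by blast
  have bj: "coeff b (Suc j) \<notin> q" using j by (simp add: b_def)
  then have "\<not> cin q b" unfolding cin_def by blast
  then obtain d where d: "coeff b d \<notin> q" "\<And>i. i > d \<Longrightarrow> coeff b i \<in> q" using maxidx[OF iq] by blast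
  have d1: "d \<ge> 1" using d(2)[of "Suc j"] bj by (cases "d = 0") auto
  have "\<not> cin q w"
  proof
    assume "cin q w"
    then have "cin q (b * w)" by (rule cin_mult_right[OF iq])
    then have "cin q (b * w - (b * w - 1))" using cbw cin_diff[OF iq] by blast
    then have "cin q 1" by simp
    then have "coeff (1::'a poly) 0 \<in> q" unfolding cin_def by blast
    then show False using one_q by simp
  qed
  then obtain e where e: "coeff w e \<notin> q" "\<And>i. i > e \<Longrightarrow> coeff w i \<in> q" using maxidx[OF iq] by blast
  have t: "coeff (b * w) (d + e) - coeff b d * coeff w e \<in> q"
    by (rule top_coeff[OF pq]) (use d e in auto)
  have "coeff (b * w - 1) (d + e) \<in> q" using cbw unfolding cin_def by blast
  then have "coeff (b * w) (d + e) \<in> q" using d1 by simp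
  then have "coeff (b * w) (d + e) - (coeff (b * w) (d + e) - coeff b d * coeff w e) \<in> q"
    using t idealD(6)[OF iq] by blast
  then have "coeff b d * coeff w e \<in> q" by simp
  then show False using prime_ideal_D(3)[OF pq] d e by blast
qed


lemma monom_in: "c \<in> q \<Longrightarrow> monom c n \<in> Q"
  by (rule cin_in[OF iQ cin_monom[OF iq]])

lemma exists_min: "\<exists>p N. p \<in> Q \<and> \<not> cin q p \<and> degree p = N \<and> (\<forall>r\<in>Q. degree r < N \<longrightarrow> cin q r)"
proof -
  define N where "N = (LEAST n. \<exists>p\<in>Q. \<not> cin q p \<and> degree p = n)"
  obtain p0 where "p0 \<in> Q" "\<not> cin q p0" using exists_noncin by blast
  then have ex: "\<exists>p\<in>Q. \<not> cin q p \<and> degree p = degree p0" by blast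
  have "\<exists>p\<in>Q. \<not> cin q p \<and> degree p = N" unfolding N_def by (rule LeastI_ex) (use ex in blast)
  moreover have "cin q r" if "r \<in> Q" "degree r < N" for r
  proof (rule ccontr)
    assume "\<not> cin q r"
    then have "\<exists>p\<in>Q. \<not> cin q p \<and> degree p = degree r" using that by blast
    then have "N \<le> degree r" unfolding N_def by (rule Least_le)
    then show False using that by simp
  qed
  ultimately show ?thesis by blast
qed

end

locale gsetup2 = gsetup +
  fixes p :: "'a poly" and N :: nat
  assumes pQ: "p \<in> Q" and pnc: "\<not> cin q p" and pdeg: "degree p = N"
    and pmin: "\<And>r. r \<in> Q \<Longrightarrow> degree r < N \<Longrightarrow> cin q r"
begin

abbreviation "a \<equiv> lead_coeff p"

lemma p0: "p \<noteq> 0" using pnc cin_0[OF iq] by blast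

lemma N1: "N \<ge> 1"
proof (rule ccontr)
  assume "\<not> N \<ge> 1"
  then have "degree p = 0" using pdeg by simp
  then obtain c where c: "p = [:c:]" by (metis degree_eq_zeroE)
  then have "c \<in> q" using pQ const_in by simp
  then show False using pnc c cin_constI[OF iq] by simp
qed

lemma a_notin: "a \<notin> q"
proof
  assume aq: "a \<in> q"
  define p' where "p' = p - monom a N"
  have "p' \<in> Q" unfolding p'_def using pQ monom_in[OF aq] idealD(6)[OF iQ] by blast
  moreover have "degree p' < N"
  proof (rule degree_lt_from_coeffs)
    show "N > 0" using N1 by simp
    fix i assume "N \<le> i"
    then show "coeff p' i = 0" unfolding p'_def using pdeg
      by (cases "i = N") (auto simp: coeff_monom coeff_eq_0)
  qed
  ultimately have "cin q p'" using pmin by blast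
  have "cin q p"
    unfolding cin_def
  proof
    fix i show "coeff p i \<in> q"
    proof (cases "i = N")
      case True then show ?thesis using aq pdeg by simp
    next
      case False
      then have "coeff p i = coeff p' i" unfolding p'_def by (simp add: coeff_monom)
      then show ?thesis using \<open>cin q p'\<close> unfolding cin_def by simp
    qed
  qed
  then show False using pnc by blast
qed

lemma apow_notin: "a ^ k \<notin> q"
  using prime_power[OF pq] a_notin by blast

lemma smult_eq: "smult c r = [:c:] * r" by simp

lemma smult_in: "r \<in> Q \<Longrightarrow> smult c r \<in> Q"
  using idealD(3)[OF iQ, of r "[:c:]"] by simp

lemma smult_notin: "r \<notin> Q \<Longrightarrow> c \<notin> q \<Longrightarrow> smult c r \<notin> Q"
  using prime_ideal_D(3)[OF prime, of "[:c:]" r] const_in by auto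


lemma claimC: "v \<notin> Q \<Longrightarrow> \<exists>w B. w \<notin> q \<and> [:w:] - B * v \<in> Q"
proof (induction "degree v" arbitrary: v rule: less_induct)
  case less
  show ?case
  proof (cases "degree v \<ge> N")
    case True
    obtain k h r where khr: "smult (a ^ k) v = p * h + r" "r = 0 \<or> degree r < degree p"
      using pdiv[OF p0] by blast
    have rv: "r = smult (a ^ k) v - p * h" using khr(1) by (simp add: algebra_simps)
    have "r \<notin> Q"
    proof
      assume "r \<in> Q"
      moreover have "p * h \<in> Q" using idealD(4)[OF iQ pQ] .
      ultimately have "smult (a ^ k) v \<in> Q" using khr(1) idealD(2)[OF iQ] by simp
      then show False using smult_notin[OF less.prems apow_notin] by blast
    qed
    then have "r \<noteq> 0" using idealD(1)[OF iQ] by blast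
    then have "degree r < degree v" using khr(2) pdeg True by simp
    then obtain w B where wB: "w \<notin> q" "[:w:] - B * r \<in> Q" using less.hyps \<open>r \<notin> Q\<close> by blast
    have "[:w:] - (B * [:a ^ k:]) * v = ([:w:] - B * r) - B * (p * h)"
      unfolding rv by (simp add: algebra_simps)
    moreover have "B * (p * h) \<in> Q" using idealD(3)[OF iQ idealD(4)[OF iQ pQ]] .
    ultimately have "[:w:] - (B * [:a ^ k:]) * v \<in> Q" using wB(2) idealD(6)[OF iQ] by metis
    then show ?thesis using wB(1) by blast
  next
    case False
    show ?thesis
    proof (cases "lead_coeff v \<in> q")
      case lq: True
      show ?thesis
      proof (cases "degree v = 0")
        case True
        then obtain c where c: "v = [:c:]" by (metis degree_eq_zeroE)
        then have "c \<in> q" using lq by simp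
        then show ?thesis using less.prems c const_in by blast
      next
        case d0: False
        define v' where "v' = v - monom (lead_coeff v) (degree v)"
        have mQ: "monom (lead_coeff v) (degree v) \<in> Q" by (rule monom_in[OF lq])
        have "v' \<notin> Q"
        proof
          assume "v' \<in> Q"
          then have "v' + monom (lead_coeff v) (degree v) \<in> Q" using mQ idealD(2)[OF iQ] by blast
          then show False using less.prems unfolding v'_def by simp
        qed
        moreover have "degree v' < degree v"
        proof (rule degree_lt_from_coeffs)
          show "degree v > 0" using d0 by simp
          fix i assume "degree v \<le> i"
          then show "coeff v' i = 0" unfolding v'_def
            by (cases "i = degree v") (auto simp: coeff_monom coeff_eq_0)
        qed
        ultimately obtain w B where wB: "w \<notin> q" "[:w:] - B * v' \<in> Q" using less.hyps by blast
        have "[:w:] - B * v = ([:w:] - B * v') - B * monom (lead_coeff v) (degree v)"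
          unfolding v'_def by (simp add: algebra_simps)
        moreover have "B * monom (lead_coeff v) (degree v) \<in> Q" using idealD(3)[OF iQ mQ] .
        ultimately have "[:w:] - B * v \<in> Q" using wB(2) idealD(6)[OF iQ] by metis
        then show ?thesis using wB(1) by blast
      qed
    next
      case lq: False
      show ?thesis
      proof (cases "degree v = 0")
        case True
        then obtain c where c: "v = [:c:]" by (metis degree_eq_zeroE)
        have "[:c:] - 1 * v \<in> Q" using c idealD(1)[OF iQ] by simp
        moreover have "c \<notin> q" using lq c by simp
        ultimately show ?thesis by blast
      next
        case d0: False
        have v0: "v \<noteq> 0" using d0 by auto
        obtain k h r where khr: "smult (lead_coeff v ^ k) p = v * h + r" "r = 0 \<or> degree r < degree v"
          using pdiv[OF v0] by blast
        define c where "c = lead_coeff v ^ k"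
        have cq: "c \<notin> q" unfolding c_def using prime_power[OF pq] lq by blast
        have rv: "r = smult c p - v * h" using khr(1) by (simp add: c_def algebra_simps)
        have cpQ: "smult c p \<in> Q" by (rule smult_in[OF pQ])
        show ?thesis
        proof (cases "r \<in> Q")
          case False
          then have "r \<noteq> 0" using idealD(1)[OF iQ] by blast
          then have "degree r < degree v" using khr(2) by simp
          then obtain w B where wB: "w \<notin> q" "[:w:] - B * r \<in> Q" using less.hyps False by blast
          have "[:w:] - (- (B * h)) * v = ([:w:] - B * r) + B * smult c p"
            unfolding rv by (simp add: algebra_simps)
          moreover have "B * smult c p \<in> Q" using idealD(3)[OF iQ cpQ] .
          ultimately have "[:w:] - (- (B * h)) * v \<in> Q" using wB(2) idealD(2)[OF iQ] by metis
          then show ?thesis using wB(1) by blast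
        next
          case rQ: True
          have "v * h = smult c p - r" using rv by simp
          then have "v * h \<in> Q" using cpQ rQ idealD(6)[OF iQ] by metis
          then have hQ: "h \<in> Q" using prime_ideal_D(3)[OF prime] less.prems by blast
          have "cin q h"
          proof (cases "h = 0")
            case True then show ?thesis using cin_0[OF iq] by simp
          next
            case h0: False
            have "degree (v * h) \<le> N"
            proof -
              have "degree (smult c p - r) \<le> max (degree (smult c p)) (degree r)" by (rule degree_diff_le_max)
              moreover have "degree (smult c p) \<le> N" using pdeg by simp
              moreover have "degree r \<le> N" using khr(2) False by auto
              ultimately show ?thesis using \<open>v * h = smult c p - r\<close> by simp
            qed
            then have "degree h < N" using degree_mult_eq[OF v0 h0] d0 by simp
            then show ?thesis using pmin hQ by blast
          qed
          moreover have "cin q r"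
          proof (cases "r = 0")
            case True then show ?thesis using cin_0[OF iq] by simp
          next
            case False then show ?thesis using pmin rQ khr(2) \<open>\<not> N \<le> degree v\<close> by fastforce
          qed
          ultimately have "cin q (v * h + r)" using cin_add[OF iq] cin_mult_right[OF iq] by blast
          then have "coeff (smult c p) N \<in> q" using khr(1) unfolding cin_def c_def by metis
          then have "c * a \<in> q" using pdeg by simp
          then show ?thesis using prime_ideal_D(3)[OF pq] cq a_notin by blast
        qed
      qed
    qed
  qed
qed


definition Zset :: "'a set \<Rightarrow> 'a poly set" where
  "Zset M = {r + s | r s. r \<in> Q \<and> cin M s}"

lemma Zset_ideal: assumes iM: "is_ideal M" shows "is_ideal (Zset M)"
  unfolding is_ideal_def
proof (intro conjI ballI allI)
  show "0 \<in> Zset M" unfolding Zset_def using idealD(1)[OF iQ] cin_0[OF iM] by force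
next
  fix x y assume "x \<in> Zset M" "y \<in> Zset M"
  then obtain r1 s1 r2 s2 where h: "x = r1 + s1" "y = r2 + s2" "r1 \<in> Q" "r2 \<in> Q" "cin M s1" "cin M s2"
    unfolding Zset_def by blast
  have "x + y = (r1 + r2) + (s1 + s2)" using h by (simp add: algebra_simps)
  moreover have "r1 + r2 \<in> Q" using h idealD(2)[OF iQ] by blast
  moreover have "cin M (s1 + s2)" using h cin_add[OF iM] by blast
  ultimately show "x + y \<in> Zset M" unfolding Zset_def by blast
next
  fix c x assume "x \<in> Zset M"
  then obtain r1 s1 where h: "x = r1 + s1" "r1 \<in> Q" "cin M s1" unfolding Zset_def by blast
  have "c * x = c * r1 + c * s1" using h by (simp add: algebra_simps)
  moreover have "c * r1 \<in> Q" using h idealD(3)[OF iQ] by blast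
  moreover have "cin M (c * s1)" using h cin_mult_right[OF iM] by blast
  ultimately show "c * x \<in> Zset M" unfolding Zset_def by blast
qed

lemma Zset_Q: "Q \<subseteq> Zset M" if "is_ideal M"
proof
  fix x assume "x \<in> Q" then show "x \<in> Zset M" unfolding Zset_def using cin_0[OF that] by force
qed

lemma Zset_M: "is_ideal M \<Longrightarrow> cin M s \<Longrightarrow> s \<in> Zset M"
  unfolding Zset_def using idealD(1)[OF iQ] by force

lemma lying_over:
  assumes M: "maximal_ideal M" and qM: "q \<subseteq> M" and aM: "a \<notin> M"
  shows "1 \<notin> Zset M"
proof
  assume "1 \<in> Zset M"
  then obtain r s where rs: "1 = r + s" "r \<in> Q" "cin M s" unfolding Zset_def by blast
  have PM: "prime_ideal M" using maximal_prime[OF M] .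
  have iM: "is_ideal M" using prime_ideal_D(1)[OF PM] .
  obtain k h r' where khr: "smult (a ^ k) r = p * h + r'" "r' = 0 \<or> degree r' < degree p"
    using pdiv[OF p0] by blast
  have "r' = smult (a ^ k) r - p * h" using khr(1) by (simp add: algebra_simps)
  moreover have "smult (a ^ k) r \<in> Q" by (rule smult_in[OF rs(2)])
  moreover have "p * h \<in> Q" using idealD(4)[OF iQ pQ] .
  ultimately have "r' \<in> Q" using idealD(6)[OF iQ] by metis
  then have "cin q r'" using pmin khr(2) pdeg cin_0[OF iq] by blast
  then have r'M: "cin M r'" using cin_mono[OF qM] by blast
  define D where "D = - (r' + smult (a ^ k) s)"
  have DM: "cin M D" unfolding D_def using r'M rs(3) cin_add[OF iM] cin_smult[OF iM] cin_uminus[OF iM] by blast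
  have eq: "p * h = [:a ^ k:] + D"
  proof -
    have "[:a ^ k:] = smult (a ^ k) (r + s)" using rs(1) by (metis mult.right_neutral one_pCons smult_pCons smult_0_right)
    also have "\<dots> = p * h + r' + smult (a ^ k) s" using khr(1) by (simp add: smult_add_right)
    finally show ?thesis unfolding D_def by (simp add: algebra_simps)
  qed
  have akM: "a ^ k \<notin> M" using prime_power[OF PM] aM by blast
  show False
  proof (cases "cin M h")
    case True
    then have "cin M (p * h)" using cin_mult_right[OF iM] by blast
    then have "coeff (p * h) 0 \<in> M" unfolding cin_def by blast
    moreover have "coeff D 0 \<in> M" using DM unfolding cin_def by blast
    ultimately have "coeff (p * h) 0 - coeff D 0 \<in> M" using idealD(6)[OF iM] by blast
    then show False using akM eq by simp
  next
    case False
    then obtain e where e: "coeff h e \<notin> M" "\<And>i. i > e \<Longrightarrow> coeff h i \<in> M" using maxidx[OF iM] by blast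
    have t: "coeff (p * h) (N + e) - coeff p N * coeff h e \<in> M"
    proof (rule top_coeff[OF PM])
      fix i assume "i > N" then show "coeff p i \<in> M" using pdeg idealD(1)[OF iM] by (simp add: coeff_eq_0)
    qed (use e in auto)
    have "coeff (p * h) (N + e) = coeff D (N + e)" using eq N1 by (simp add: coeff_pCons split: nat.split)
    then have "coeff (p * h) (N + e) \<in> M" using DM unfolding cin_def by simp
    then have "coeff (p * h) (N + e) - (coeff (p * h) (N + e) - coeff p N * coeff h e) \<in> M"
      using t idealD(6)[OF iM] by blast
    then have "a * coeff h e \<in> M" using pdeg by simp
    then show False using prime_ideal_D(3)[OF PM] aM e(1) by blast
  qed
qed


lemma q_maximal:
  assumes H: "hilbert_ring TYPE('a)"
  shows "maximal_ideal q"
proof (rule ccontr)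
  assume nm: "\<not> maximal_ideal q"
  obtain S where S0: "\<forall>M\<in>S. maximal_ideal M" "q = \<Inter>S"
    using H[unfolded hilbert_ring_def, rule_format, OF pq] by (elim exE conjE)
  have S: "\<And>M. M \<in> S \<Longrightarrow> maximal_ideal M" "q = \<Inter>S" using S0 by auto
  obtain w B where wB: "w \<notin> q" "[:w:] - B * u \<in> Q" using claimC[OF uQ] by blast
  have "a * w \<notin> q" using prime_ideal_D(3)[OF pq] wB(1) a_notin by blast
  then obtain M where M: "M \<in> S" "a * w \<notin> M" unfolding S(2) by auto
  have Mm: "maximal_ideal M" using S(1)[OF M(1)] .
  have iM: "is_ideal M" using Mm unfolding maximal_ideal_def by blast
  have aM: "a \<notin> M" using M(2) idealD(4)[OF iM, of a w] by auto
  have wM: "w \<notin> M" using M(2) idealD(3)[OF iM, of w a] by auto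
  have qM: "q \<subseteq> M" unfolding S(2) using M(1) by (rule Inter_lower)
  have "M \<noteq> q" using nm Mm by blast
  then obtain m0 where m0: "m0 \<in> M" "m0 \<notin> q" using qM by auto
  have "1 \<notin> Zset M" by (rule lying_over[OF Mm qM aM])
  then obtain P where P: "maximal_ideal P" "Zset M \<subseteq> P" using exists_maximal[OF Zset_ideal[OF iM]] by blast
  have PP: "prime_ideal P" using maximal_prime[OF P(1)] .
  have iP: "is_ideal P" using prime_ideal_D(1)[OF PP] .
  have QP: "Q \<subseteq> P" using Zset_Q[OF iM] P(2) by blast
  have MP: "[:x:] \<in> P" if "x \<in> M" for x using Zset_M[OF iM cin_constI[OF iM that]] P(2) by blast
  have "[:m0:] \<notin> Q" using m0(2) const_in by blast
  then have "u \<in> P" using gprop_prime[OF g PP QP MP[OF m0(1)]] by blast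
  then have "B * u \<in> P" using idealD(3)[OF iP] by blast
  moreover have "[:w:] - B * u \<in> P" using wB(2) QP by blast
  ultimately have "([:w:] - B * u) + B * u \<in> P" using idealD(2)[OF iP] by blast
  then have wP: "w \<in> contract P" by (simp add: contract_def)
  have "is_ideal (contract P) \<and> M \<subseteq> contract P" using contract_ideal[OF iP] MP by (auto simp: contract_def)
  then have "contract P = M \<or> contract P = UNIV" using Mm unfolding maximal_ideal_def by blast
  moreover have "contract P \<noteq> UNIV" using contract_prime[OF PP] unfolding prime_ideal_def by blast
  ultimately show False using wP wM by blast
qed

lemma monic_exists:
  assumes mq: "maximal_ideal q"
  shows "\<exists>f\<in>Q. lead_coeff f = 1"
proof -
  obtain t where t: "t * a - 1 \<in> q" using maximal_inv[OF mq a_notin] by blast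
  define f where "f = smult t p - monom (t * a - 1) N"
  have "f \<in> Q" unfolding f_def by (rule idealD(6)[OF iQ smult_in[OF pQ] monom_in[OF t]])
  moreover have cN: "coeff f N = 1" unfolding f_def using pdeg by simp
  moreover have "degree f = N"
  proof (rule antisym)
    show "degree f \<le> N" unfolding f_def using pdeg
      by (intro degree_le) (auto simp: coeff_monom coeff_eq_0)
    show "N \<le> degree f" using cN by (intro le_degree) simp
  qed
  ultimately show ?thesis by auto
qed

end



lemma G_max:
  fixes Q :: "'a::idom poly set"
  assumes H: "hilbert_ring TYPE('a)" and G: "G_ideal Q"
  shows "prime_ideal Q \<and> maximal_ideal (contract Q) \<and> (\<exists>f\<in>Q. lead_coeff f = 1)"
proof -
  obtain u where u: "gprop Q u" using G_ideal_gprop[OF G] by blast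
  have P: "prime_ideal Q" using G unfolding G_ideal_def by blast
  interpret gsetup Q u using P u by unfold_locales
  obtain p N where pN: "p \<in> Q" "\<not> cin q p" "degree p = N" "\<forall>r\<in>Q. degree r < N \<longrightarrow> cin q r"
    using exists_min by blast
  interpret gsetup2 Q u p N using pN by unfold_locales auto
  show ?thesis using P q_maximal[OF H] monic_exists[OF q_maximal[OF H]] by blast
qed

lemma monic_div:
  fixes f :: "'a::comm_ring_1 poly"
  assumes f1: "lead_coeff f = 1" and df: "degree f \<ge> 1" and iA: "is_ideal A"
  shows "(\<And>i. i \<ge> 1 \<Longrightarrow> coeff (f * v) i \<in> A) \<Longrightarrow> cin A v"
proof (induction "degree v" arbitrary: v rule: less_induct)
  case less
  show ?case
  proof (cases "v = 0")
    case True then show ?thesis using cin_0[OF iA] by simp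
  next
    case v0: False
    define c where "c = lead_coeff v"
    have "coeff (f * v) (degree f + degree v) = c"
      using coeff_mult_degree_sum[of f v] f1 c_def by simp
    then have cA: "c \<in> A" using less.prems[of "degree f + degree v"] df by simp
    show ?thesis
    proof (cases "degree v = 0")
      case True
      then have "v = [:c:]" unfolding c_def by (metis degree_eq_zeroE lead_coeff_pCons(2) pCons_0_0)
      then show ?thesis using cin_constI[OF iA cA] by simp
    next
      case d0: False
      define v' where "v' = v - monom c (degree v)"
      have cm: "cin A (f * monom c (degree v))" using cin_mult_right[OF iA cin_monom[OF iA cA]] .
      have "degree v' < degree v"
      proof (rule degree_lt_from_coeffs)
        show "degree v > 0" using d0 by simp
        fix i assume "degree v \<le> i"
        then show "coeff v' i = 0" unfolding v'_def c_def
          by (cases "i = degree v") (auto simp: coeff_monom coeff_eq_0)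
      qed
      moreover have "coeff (f * v') i \<in> A" if "i \<ge> 1" for i
      proof -
        have "coeff (f * v') i = coeff (f * v) i - coeff (f * monom c (degree v)) i"
          unfolding v'_def by (simp add: algebra_simps)
        then show ?thesis using less.prems[OF that] cm idealD(6)[OF iA] unfolding cin_def by metis
      qed
      ultimately have "cin A v'" using less.hyps by blast
      then have "cin A (v' + monom c (degree v))" using cin_add[OF iA] cin_monom[OF iA cA] by blast
      then show ?thesis unfolding v'_def by simp
    qed
  qed
qed

lemma const_div:
  fixes f :: "'a::comm_ring_1 poly"
  assumes f1: "lead_coeff f = 1" and df: "degree f \<ge> 1" and iA: "is_ideal A"
    and eq: "[:x:] = f * v + s" and sA: "cin A s"
  shows "x \<in> A"
proof -
  have fv: "f * v = [:x:] - s" using eq by simp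
  have "cin A v"
  proof (rule monic_div[OF f1 df iA])
    fix i :: nat assume "i \<ge> 1"
    then have "coeff (f * v) i = - coeff s i" unfolding fv by (cases i) auto
    then show "coeff (f * v) i \<in> A" using sA idealD(5)[OF iA] unfolding cin_def by simp
  qed
  have "x = coeff f 0 * coeff v 0 + coeff s 0" using arg_cong[OF eq, of "\<lambda>p. coeff p 0"] by (simp add: coeff_mult)
  moreover have "coeff f 0 * coeff v 0 \<in> A" using \<open>cin A v\<close> idealD(3)[OF iA] unfolding cin_def by blast
  moreover have "coeff s 0 \<in> A" using sA unfolding cin_def by blast
  ultimately show ?thesis using idealD(2)[OF iA] by simp
qed


lemma B1:
  fixes Q :: "'a::idom poly set"
  assumes P: "prime_ideal Q" and mx: "maximal_ideal (contract Q)" and ex: "\<exists>f\<in>Q. lead_coeff f = 1"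
  shows "contract (ideal_pow Q t) \<subseteq> ideal_pow (contract Q) t"
proof -
  define m where "m = contract Q"
  have iQ: "is_ideal Q" using prime_ideal_D(1)[OF P] .
  have im: "is_ideal m" using mx unfolding m_def maximal_ideal_def by blast
  have m_in: "c \<in> m \<Longrightarrow> monom c n \<in> Q" for c n unfolding m_def
    by (rule cin_in[OF iQ cin_monom[OF contract_ideal[OF iQ]]])
  define D where "D = (LEAST n. \<exists>f\<in>Q. lead_coeff f = 1 \<and> degree f = n)"
  have "\<exists>f\<in>Q. lead_coeff f = 1 \<and> degree f = D" unfolding D_def by (rule LeastI_ex) (use ex in blast)
  then obtain f where f: "f \<in> Q" "lead_coeff f = 1" "degree f = D" by blast
  have Dmin: "D \<le> degree g" if "g \<in> Q" "lead_coeff g = 1" for g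
    unfolding D_def by (rule Least_le) (use that in blast)
  have f0: "f \<noteq> 0" using f(2) by auto
  have D1: "D \<ge> 1"
  proof (rule ccontr)
    assume "\<not> D \<ge> 1"
    then have "degree f = 0" using f by simp
    then have "f = 1" using f(2) by (metis degree_eq_zeroE lead_coeff_pCons(2) one_pCons pCons_0_0)
    then show False using f(1) prime_ideal_D(2)[OF P] by simp
  qed
  have minR: "r \<in> Q \<Longrightarrow> degree r < D \<Longrightarrow> cin m r" for r
  proof (induction "degree r" arbitrary: r rule: less_induct)
    case less
    show ?case
    proof (cases "lead_coeff r \<in> m")
      case lq: True
      show ?thesis
      proof (cases "degree r = 0")
        case True
        then have "r = [:lead_coeff r:]" by (metis degree_eq_zeroE lead_coeff_pCons(2) pCons_0_0)
        then show ?thesis using cin_constI[OF im lq] by metis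
      next
        case d0: False
        define r' where "r' = r - monom (lead_coeff r) (degree r)"
        have "r' \<in> Q" unfolding r'_def by (rule idealD(6)[OF iQ less.prems(1) m_in[OF lq]])
        moreover have "degree r' < degree r"
        proof (rule degree_lt_from_coeffs)
          show "degree r > 0" using d0 by simp
          fix i assume "degree r \<le> i"
          then show "coeff r' i = 0" unfolding r'_def
            by (cases "i = degree r") (auto simp: coeff_monom coeff_eq_0)
        qed
        ultimately have "cin m r'" using less.hyps less.prems(2) by simp
        then have "cin m (r' + monom (lead_coeff r) (degree r))" using cin_add[OF im] cin_monom[OF im lq] by blast
        then show ?thesis unfolding r'_def by simp
      qed
    next
      case lq: False
      obtain t where t: "t * lead_coeff r - 1 \<in> m" using maximal_inv[OF mx[folded m_def] lq] by blast
      define g where "g = smult t r - monom (t * lead_coeff r - 1) (degree r)"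
      have "g \<in> Q" unfolding g_def
        by (rule idealD(6)[OF iQ _ m_in[OF t]]) (use idealD(3)[OF iQ less.prems(1), of "[:t:]"] in simp)
      moreover have cN: "coeff g (degree r) = 1" unfolding g_def by simp
      moreover have "degree g = degree r"
      proof (rule antisym)
        show "degree g \<le> degree r" unfolding g_def
          by (intro degree_le) (auto simp: coeff_monom coeff_eq_0)
        show "degree r \<le> degree g" using cN by (intro le_degree) simp
      qed
      ultimately have "D \<le> degree r" using Dmin[of g] by simp
      then show ?thesis using less.prems(2) by simp
    qed
  qed
  have QK: "\<exists>v s. r = f * v + s \<and> cin m s" if "r \<in> Q" for r
  proof -
    obtain k h s where khs: "smult (lead_coeff f ^ k) r = f * h + s" "s = 0 \<or> degree s < degree f"
      using pdiv[OF f0] by blast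
    have rs: "r = f * h + s" using khs(1) f(2) by simp
    have "s = r - f * h" using rs by simp
    then have "s \<in> Q" using idealD(6)[OF iQ that idealD(4)[OF iQ f(1)]] by simp
    then have "cin m s" using minR khs(2) f(3) cin_0[OF im] by blast
    then show ?thesis using rs by blast
  qed
  define K where "K = (\<lambda>t. {x. \<exists>v s. x = f * v + s \<and> cin (ideal_pow m t) s})"
  have Kid: "is_ideal (K t)" for t
    unfolding is_ideal_def K_def
  proof (intro conjI ballI allI)
    have ip: "is_ideal (ideal_pow m t)" by (rule ideal_pow_ideal)
    show "0 \<in> {x. \<exists>v s. x = f * v + s \<and> cin (ideal_pow m t) s}"
      using cin_0[OF ip] by (intro CollectI exI[of _ 0]) simp
  next
    have ip: "is_ideal (ideal_pow m t)" by (rule ideal_pow_ideal)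
    fix x y assume "x \<in> {x. \<exists>v s. x = f * v + s \<and> cin (ideal_pow m t) s}"
      "y \<in> {x. \<exists>v s. x = f * v + s \<and> cin (ideal_pow m t) s}"
    then obtain v1 s1 v2 s2 where h: "x = f * v1 + s1" "y = f * v2 + s2" "cin (ideal_pow m t) s1" "cin (ideal_pow m t) s2"
      by blast
    have "x + y = f * (v1 + v2) + (s1 + s2)" using h by (simp add: algebra_simps)
    then show "x + y \<in> {x. \<exists>v s. x = f * v + s \<and> cin (ideal_pow m t) s}"
      using cin_add[OF ip h(3,4)] by blast
  next
    have ip: "is_ideal (ideal_pow m t)" by (rule ideal_pow_ideal)
    fix c x assume "x \<in> {x. \<exists>v s. x = f * v + s \<and> cin (ideal_pow m t) s}"
    then obtain v1 s1 where h: "x = f * v1 + s1" "cin (ideal_pow m t) s1" by blast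
    have "c * x = f * (c * v1) + c * s1" using h by (simp add: algebra_simps)
    then show "c * x \<in> {x. \<exists>v s. x = f * v + s \<and> cin (ideal_pow m t) s}"
      using cin_mult_right[OF ip h(2)] by blast
  qed
  have QtK: "ideal_pow Q t \<subseteq> K t"
  proof (induction t)
    case 0
    show ?case unfolding K_def
    proof
      fix x :: "'a poly"
      show "x \<in> {x. \<exists>v s. x = f * v + s \<and> cin (ideal_pow m 0) s}"
        by (intro CollectI exI[of _ 0] exI[of _ x]) (simp add: cin_def)
    qed
  next
    case (Suc t)
    have "ideal_prod (ideal_pow Q t) Q \<subseteq> K (Suc t)"
    proof (rule ideal_prod_least[OF Kid])
      fix x y assume xy: "x \<in> ideal_pow Q t" "y \<in> Q"
      then obtain v1 s1 where h1: "x = f * v1 + s1" "cin (ideal_pow m t) s1" using Suc unfolding K_def by blast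
      obtain v2 s2 where h2: "y = f * v2 + s2" "cin m s2" using QK[OF xy(2)] by blast
      have "x * y = f * (v1 * y + s1 * v2) + s1 * s2" using h1 h2 by (simp add: algebra_simps)
      moreover have "cin (ideal_pow m (Suc t)) (s1 * s2)" using cin_prod[OF h1(2) h2(2)] by simp
      ultimately show "x * y \<in> K (Suc t)" unfolding K_def by blast
    qed
    then show ?case by simp
  qed
  show ?thesis
  proof
    fix x assume "x \<in> contract (ideal_pow Q t)"
    then have "[:x:] \<in> K t" using QtK by (auto simp: contract_def)
    then obtain v s where "[:x:] = f * v + s" "cin (ideal_pow m t) s" unfolding K_def by blast
    then have "x \<in> ideal_pow m t" using const_div[OF f(2) _ ideal_pow_ideal] D1 f(3) by blast
    then show "x \<in> ideal_pow (contract Q) t" unfolding m_def .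
  qed
qed




lemma ideal_quot1: "is_ideal J \<Longrightarrow> is_ideal {y. \<forall>z\<in>Z. y * z \<in> J}"
  unfolding is_ideal_def by (auto simp: algebra_simps)

lemma ideal_quot2: "is_ideal J \<Longrightarrow> is_ideal {z. c * z \<in> J}"
  unfolding is_ideal_def by (auto simp: algebra_simps)

lemma pow_prod:
  fixes A B C :: "'a::comm_ring_1 set"
  assumes iC: "is_ideal C" and AB: "\<And>a b. a \<in> A \<Longrightarrow> b \<in> B \<Longrightarrow> a * b \<in> C"
  shows "y \<in> ideal_pow A t \<Longrightarrow> z \<in> ideal_pow B t \<Longrightarrow> y * z \<in> ideal_pow C t"
proof (induction t arbitrary: y z)
  case 0 then show ?case by simp
next
  case (Suc t)
  have "ideal_prod (ideal_pow A t) A \<subseteq> {y. \<forall>z\<in>ideal_prod (ideal_pow B t) B. y * z \<in> ideal_pow C (Suc t)}"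
  proof (rule ideal_prod_least[OF ideal_quot1[OF ideal_pow_ideal]])
    fix y1 a assume ya: "y1 \<in> ideal_pow A t" "a \<in> A"
    have "ideal_prod (ideal_pow B t) B \<subseteq> {z. (y1 * a) * z \<in> ideal_pow C (Suc t)}"
    proof (rule ideal_prod_least[OF ideal_quot2[OF ideal_pow_ideal]])
      fix z1 b assume zb: "z1 \<in> ideal_pow B t" "b \<in> B"
      have "(y1 * z1) * (a * b) \<in> ideal_prod (ideal_pow C t) C"
        using Suc.IH[OF ya(1) zb(1)] AB[OF ya(2) zb(2)] by (rule ideal_prod_mem)
      then show "z1 * b \<in> {z. (y1 * a) * z \<in> ideal_pow C (Suc t)}" by (simp add: algebra_simps)
    qed
    then show "y1 * a \<in> {y. \<forall>z\<in>ideal_prod (ideal_pow B t) B. y * z \<in> ideal_pow C (Suc t)}" by blast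
  qed
  then show ?case using Suc.prems by auto
qed

lemma B3:
  fixes MM :: "'a::comm_ring_1 set set"
  assumes fin: "finite MM" and ne: "MM \<noteq> {}" and mx: "\<And>m. m \<in> MM \<Longrightarrow> maximal_ideal m"
  shows "(\<Inter>m\<in>MM. ideal_pow m t) \<subseteq> ideal_pow (\<Inter>MM) t"
proof
  fix x assume x: "x \<in> (\<Inter>m\<in>MM. ideal_pow m t)"
  define J where "J = \<Inter>MM"
  have iJ: "is_ideal J" unfolding J_def using mx by (intro ideal_Inter) (auto simp: maximal_ideal_def)
  define K where "K = {r. r * x \<in> ideal_pow J t}"
  have iK: "is_ideal K" unfolding K_def using ideal_pow_ideal[of J t]
    unfolding is_ideal_def by (auto simp: algebra_simps)
  show "x \<in> ideal_pow (\<Inter>MM) t"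
  proof (cases "1 \<in> K")
    case True then show ?thesis unfolding K_def J_def by simp
  next
    case False
    obtain M' where M': "maximal_ideal M'" "K \<subseteq> M'" using exists_maximal[OF iK False] by blast
    have PM': "prime_ideal M'" using maximal_prime[OF M'(1)] .
    have ex: "\<exists>h. h \<in> m \<and> h \<notin> M'" if "m \<in> MM" "m \<noteq> M'" for m
    proof (rule ccontr)
      assume "\<not> (\<exists>h. h \<in> m \<and> h \<notin> M')"
      then have "m \<subseteq> M'" by blast
      moreover have "is_ideal M'" "M' \<noteq> UNIV" using M'(1) unfolding maximal_ideal_def by auto
      ultimately have "M' = m" using mx[OF that(1)] unfolding maximal_ideal_def by blast
      then show False using that by simp
    qed
    define h where "h = (\<lambda>m. SOME h. h \<in> m \<and> h \<notin> M')"
    have h: "h m \<in> m" "h m \<notin> M'" if "m \<in> MM" "m \<noteq> M'" for m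
      using someI_ex[OF ex[OF that]] unfolding h_def by auto
    define g where "g = (\<Prod>m\<in>MM - {M'}. h m)"
    have gM: "g \<notin> M'" unfolding g_def using h fin by (intro prime_prod[OF PM']) auto
    have gm: "g \<in> m" if "m \<in> MM" "m \<noteq> M'" for m
      unfolding g_def using that h fin mx[OF that(1)]
      by (intro ideal_prod_in[of m _ m]) (auto simp: maximal_ideal_def)
    have "g ^ t \<in> K"
    proof (cases "M' \<in> MM")
      case True
      define N where "N = \<Inter>(MM - {M'})"
      have "x * g ^ t \<in> ideal_pow J t"
      proof (rule pow_prod[OF iJ])
        fix a b assume ab: "a \<in> M'" "b \<in> N"
        show "a * b \<in> J" unfolding J_def
        proof
          fix m assume m: "m \<in> MM"
          show "a * b \<in> m"
          proof (cases "m = M'")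
            case True then show ?thesis using ab(1) mx[OF m] idealD(4) unfolding maximal_ideal_def by blast
          next
            case False then have "b \<in> m" using ab(2) m unfolding N_def by blast
            then show ?thesis using mx[OF m] idealD(3) unfolding maximal_ideal_def by blast
          qed
        qed
      next
        show "x \<in> ideal_pow M' t" using x True by blast
      next
        have "g \<in> N" unfolding N_def using gm by blast
        then show "g ^ t \<in> ideal_pow N t" by (rule power_in_pow)
      qed
      then show ?thesis unfolding K_def by (simp add: mult.commute)
    next
      case False
      have "g \<in> J" unfolding J_def using gm False by blast
      then have "g ^ t \<in> ideal_pow J t" by (rule power_in_pow)
      then show ?thesis unfolding K_def using idealD(4)[OF ideal_pow_ideal] by blast
    qed
    then have "g ^ t \<in> M'" using M'(2) by blast
    then show ?thesis using prime_power[OF PM'] gM by blast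
  qed
qed




theorem theorem3p10:
  fixes I :: "'a::idom poly set"
  assumes "hilbert_ring TYPE('a)"
    and "radical_ideal I"
    and "\<exists>F. finite F \<and> F \<noteq> {} \<and> (\<forall>Q\<in>F. G_ideal Q) \<and> I = \<Inter>F"
  shows "power_stable I"
proof -
  obtain F where F: "finite F" "F \<noteq> {}" "\<And>Q. Q \<in> F \<Longrightarrow> G_ideal Q" "I = \<Inter>F"
    using assms(3) by blast
  have iI: "is_ideal I" using assms(2) unfolding radical_ideal_def by blast
  have GM: "prime_ideal Q \<and> maximal_ideal (contract Q) \<and> (\<exists>f\<in>Q. lead_coeff f = 1)" if "Q \<in> F" for Q
    using G_max[OF assms(1) F(3)[OF that]] .
  have ge: "ideal_pow (contract I) t \<subseteq> contract (ideal_pow I t)" for t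
  proof (induction t)
    case 0 then show ?case by (simp add: contract_def)
  next
    case (Suc t)
    have "ideal_prod (ideal_pow (contract I) t) (contract I) \<subseteq> contract (ideal_prod (ideal_pow I t) I)"
    proof (rule ideal_prod_least[OF contract_ideal[OF ideal_prod_ideal]])
      fix a b assume ab: "a \<in> ideal_pow (contract I) t" "b \<in> contract I"
      then have "[:a:] \<in> ideal_pow I t" "[:b:] \<in> I" using Suc by (auto simp: contract_def)
      then have "[:a:] * [:b:] \<in> ideal_prod (ideal_pow I t) I" by (rule ideal_prod_mem)
      then show "a * b \<in> contract (ideal_prod (ideal_pow I t) I)" by (simp add: contract_def mult.commute)
    qed
    then show ?case by simp
  qed
  have cI: "contract I = \<Inter>(contract ` F)" unfolding F(4) contract_def by auto
  have le: "contract (ideal_pow I t) \<subseteq> ideal_pow (contract I) t" for t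
  proof
    fix x assume x: "x \<in> contract (ideal_pow I t)"
    have "x \<in> ideal_pow m t" if mF: "m \<in> contract ` F" for m
    proof -
      obtain Q where Q: "Q \<in> F" "m = contract Q" using mF by blast
      have "I \<subseteq> Q" using F(4) Q(1) by blast
      then have "ideal_pow I t \<subseteq> ideal_pow Q t" by (rule ideal_pow_mono)
      then have "x \<in> contract (ideal_pow Q t)" using x by (auto simp: contract_def)
      then show ?thesis using B1[of Q t] GM[OF Q(1)] Q(2) by blast
    qed
    then have "x \<in> (\<Inter>m\<in>contract ` F. ideal_pow m t)" by blast
    moreover have "(\<Inter>m\<in>contract ` F. ideal_pow m t) \<subseteq> ideal_pow (\<Inter>(contract ` F)) t"
      by (rule B3) (use F(1,2) GM in auto)
    ultimately show "x \<in> ideal_pow (contract I) t" unfolding cI by blast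
  qed
  show ?thesis unfolding power_stable_def using ge le by blast
qed



end
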